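(* Let $X,Y$ be metric spaces, $X\times Y$ with the maximum metric, $E\subseteq X\times Y$, and let $A\subseteq X$ be a set such that $E_x=\{y\in Y:(x,y)\in E\}\ne\emptyset$ for all $x\in A$. Then (i) $\dim_{\mathrm P}E\ge\dim_{\mathrm P}A+\inf_{x\in A}\vec{\dim}_{\mathrm P}E_x$; (ii) $\underline{\dim}_{\mathrm P}E\ge\underline{\dim}_{\mathrm P}A+\inf_{x\in A}\underline{\dim}_{\mathrm P}E_x$; (iii) $\vec{\dim}_{\mathrm P}E\ge\vec{\dim}_{\mathrm P}A+\inf_{x\in A}\vec{\dim}_{\mathrm P}E_x$.
   Context: For a subset $E$ of a metric space, $N_\delta(E)$ is the minimal cardinality of a cover of $E$ by sets of diameter at most $\delta$. $\underline{\dim}_{\mathrm B}E=\liminf_{\delta\to0}\frac{\log N_\delta(E)}{|\log\delta|}$, $\overline{\dim}_{\mathrm B}E=\limsup_{\delta\to0}\frac{\log N_\delta(E)}{|\log\delta|}$. $\dim_{\mathrm P}E=\inf\{\sup_n\overline{\dim}_{\mathrm B}E_n:E\subseteq\bigcup_nE_n\}$, $\underline{\dim}_{\mathrm P}E=\inf\{\sup_n\underline{\dim}_{\mathrm B}E_n:E\subseteq\bigcup_nE_n\}$ (countable covers), and $\vec{\dim}_{\mathrm P}E=\inf\{\sup_n\underline{\dim}_{\mathrm B}E_n:E_n\uparrow E\}$, where $E_n\uparrow E$ means $(E_n)$ is an increasing sequence of sets with union $E$. *)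

theory Defs
  imports "HOL-Analysis.Analysis" "HOL-Library.Liminf_Limsup"
begin

text \<open>All notions are taken relative to an explicit distance function d, so that the
  product X \<times> Y can carry the maximum metric.\<close>

definition ddiam :: "('a \<Rightarrow> 'a \<Rightarrow> real) \<Rightarrow> 'a set \<Rightarrow> ereal" where
  "ddiam d S = Sup {ereal (d x y) | x y. x \<in> S \<and> y \<in> S}"

definition cover_num :: "('a \<Rightarrow> 'a \<Rightarrow> real) \<Rightarrow> real \<Rightarrow> 'a set \<Rightarrow> ereal" where
  "cover_num d \<delta> E = Inf {ereal (real (card C)) | C. finite C \<and> E \<subseteq> \<Union>C \<and>
                                (\<forall>S\<in>C. ddiam d S \<le> ereal \<delta>)}"

definition log_cover_num :: "('a \<Rightarrow> 'a \<Rightarrow> real) \<Rightarrow> real \<Rightarrow> 'a set \<Rightarrow> ereal" where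
  "log_cover_num d \<delta> E =
     (if cover_num d \<delta> E = \<infinity> then \<infinity>
      else ereal (ln (max 1 (real_of_ereal (cover_num d \<delta> E)))))"

definition lower_box_dim :: "('a \<Rightarrow> 'a \<Rightarrow> real) \<Rightarrow> 'a set \<Rightarrow> ereal" where
  "lower_box_dim d E = Liminf (at_right 0) (\<lambda>\<delta>. log_cover_num d \<delta> E / ereal \<bar>ln \<delta>\<bar>)"

definition upper_box_dim :: "('a \<Rightarrow> 'a \<Rightarrow> real) \<Rightarrow> 'a set \<Rightarrow> ereal" where
  "upper_box_dim d E = Limsup (at_right 0) (\<lambda>\<delta>. log_cover_num d \<delta> E / ereal \<bar>ln \<delta>\<bar>)"

definition packing_dim :: "('a \<Rightarrow> 'a \<Rightarrow> real) \<Rightarrow> 'a set \<Rightarrow> ereal" where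
  "packing_dim d E = Inf {(SUP n::nat. upper_box_dim d (F n)) | F. E \<subseteq> (\<Union>n::nat. F n)}"

definition lower_packing_dim :: "('a \<Rightarrow> 'a \<Rightarrow> real) \<Rightarrow> 'a set \<Rightarrow> ereal" where
  "lower_packing_dim d E = Inf {(SUP n::nat. lower_box_dim d (F n)) | F. E \<subseteq> (\<Union>n::nat. F n)}"

definition inc_packing_dim :: "('a \<Rightarrow> 'a \<Rightarrow> real) \<Rightarrow> 'a set \<Rightarrow> ereal" where
  "inc_packing_dim d E = Inf {(SUP n::nat. lower_box_dim d (F n)) | F. incseq F \<and> (\<Union>n::nat. F n) = E}"

definition max_dist :: "'a::metric_space \<times> 'b::metric_space \<Rightarrow> 'a \<times> 'b \<Rightarrow> real" where
  "max_dist p q = max (dist (fst p) (fst q)) (dist (snd p) (snd q))"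

definition fiber :: "('a \<times> 'b) set \<Rightarrow> 'a \<Rightarrow> 'b set" where
  "fiber E x = {y. (x, y) \<in> E}"

end

theory Submission
  imports Defs
begin


lemma cover_num_ge:
  assumes "\<And>C. finite C \<Longrightarrow> E \<subseteq> \<Union>C \<Longrightarrow> (\<forall>S\<in>C. ddiam d S \<le> ereal \<delta>) \<Longrightarrow> c \<le> real (card C)"
  shows "ereal c \<le> cover_num d \<delta> E"
  unfolding cover_num_def using assms by (auto intro!: Inf_greatest)

lemma cover_num_le:
  assumes "finite C" "E \<subseteq> \<Union>C" "\<forall>S\<in>C. ddiam d S \<le> ereal \<delta>"
  shows "cover_num d \<delta> E \<le> ereal (real (card C))"
  unfolding cover_num_def using assms by (auto intro!: Inf_lower)

lemma cover_num_geD: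
  assumes "ereal c \<le> cover_num d \<delta> E" "finite C" "E \<subseteq> \<Union>C" "\<forall>S\<in>C. ddiam d S \<le> ereal \<delta>"
  shows "c \<le> real (card C)"
  using order.trans[OF assms(1) cover_num_le[OF assms(2-4)]] by simp

lemma cover_num_nonneg: "0 \<le> cover_num d \<delta> E"
  using cover_num_ge[of E d \<delta> 0] by (simp add: zero_ereal_def)

lemma cover_num_mono: "E \<subseteq> F \<Longrightarrow> cover_num d \<delta> E \<le> cover_num d \<delta> F"
  unfolding cover_num_def by (rule Inf_superset_mono) blast

lemma cover_num_none:
  assumes "\<not> (\<exists>C. finite C \<and> E \<subseteq> \<Union>C \<and> (\<forall>S\<in>C. ddiam d S \<le> ereal \<delta>))"
  shows "cover_num d \<delta> E = \<infinity>"
proof -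
  have "{ereal (real (card C)) |C. finite C \<and> E \<subseteq> \<Union>C \<and> (\<forall>S\<in>C. ddiam d S \<le> ereal \<delta>)} = {}"
    using assms by blast
  then show ?thesis unfolding cover_num_def by (metis Inf_empty top_ereal_def)
qed

lemma cover_num_attained:
  assumes "\<exists>C. finite C \<and> E \<subseteq> \<Union>C \<and> (\<forall>S\<in>C. ddiam d S \<le> ereal \<delta>)"
  shows "\<exists>C. finite C \<and> E \<subseteq> \<Union>C \<and> (\<forall>S\<in>C. ddiam d S \<le> ereal \<delta>) \<and>
              cover_num d \<delta> E = ereal (real (card C))"
proof -
  define P where "P n \<longleftrightarrow> (\<exists>C. finite C \<and> E \<subseteq> \<Union>C \<and> (\<forall>S\<in>C. ddiam d S \<le> ereal \<delta>) \<and> card C = n)" for n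
  from assms have "\<exists>n. P n" unfolding P_def by blast
  then have "P (LEAST n. P n)" by (rule LeastI_ex)
  then obtain C where C: "finite C" "E \<subseteq> \<Union>C" "\<forall>S\<in>C. ddiam d S \<le> ereal \<delta>" "card C = (LEAST n. P n)"
    unfolding P_def by blast
  have "ereal (real (card C)) \<le> cover_num d \<delta> E"
  proof (rule cover_num_ge)
    fix C' assume "finite C'" "E \<subseteq> \<Union>C'" "\<forall>S\<in>C'. ddiam d S \<le> ereal \<delta>"
    then have "P (card C')" unfolding P_def by blast
    then show "real (card C) \<le> real (card C')" using C(4) by (simp add: Least_le)
  qed
  with cover_num_le[OF C(1-3)] C show ?thesis by (intro exI[of _ C]) auto
qed

lemma cover_num_nonempty: "E \<noteq> {} \<Longrightarrow> ereal 1 \<le> cover_num d \<delta> E"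
  by (rule cover_num_ge) (auto simp: Suc_le_eq card_gt_0_iff)

lemma cover_num_empty: "cover_num d \<delta> {} = 0"
  using cover_num_le[of "{}" "{}" d \<delta>] cover_num_nonneg[of d \<delta> "{}"] by (simp add: zero_ereal_def)

lemma log_cover_num_nonneg: "0 \<le> log_cover_num d \<delta> E"
  unfolding log_cover_num_def by auto

lemma log_cover_num_empty: "log_cover_num d \<delta> {} = 0"
  unfolding log_cover_num_def cover_num_empty by (simp add: zero_ereal_def)

lemma log_cover_num_mono_num:
  assumes "cover_num d \<delta> E \<le> cover_num d' \<delta>' F"
  shows "log_cover_num d \<delta> E \<le> log_cover_num d' \<delta>' F"
proof -
  have n1: "0 \<le> cover_num d \<delta> E" by (rule cover_num_nonneg)
  show ?thesis
  proof (cases "cover_num d' \<delta>' F = \<infinity>")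
    case True then show ?thesis by (simp add: log_cover_num_def)
  next
    case False
    with assms n1 obtain a b where ab: "cover_num d \<delta> E = ereal a" "cover_num d' \<delta>' F = ereal b" "0 \<le> a" "a \<le> b"
      by (cases "cover_num d \<delta> E"; cases "cover_num d' \<delta>' F") auto
    then show ?thesis by (simp add: log_cover_num_def)
  qed
qed

lemma log_cover_num_mono: "E \<subseteq> F \<Longrightarrow> log_cover_num d \<delta> E \<le> log_cover_num d \<delta> F"
  by (intro log_cover_num_mono_num cover_num_mono)



lemma ddiam_le: "(\<And>x y. x \<in> S \<Longrightarrow> y \<in> S \<Longrightarrow> d x y \<le> \<delta>) \<Longrightarrow> ddiam d S \<le> ereal \<delta>"
  unfolding ddiam_def by (auto intro!: Sup_least)

lemma ddiam_leD: "ddiam d S \<le> ereal \<delta> \<Longrightarrow> x \<in> S \<Longrightarrow> y \<in> S \<Longrightarrow> d x y \<le> \<delta>"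
proof -
  assume a: "ddiam d S \<le> ereal \<delta>" "x \<in> S" "y \<in> S"
  have "ereal (d x y) \<le> ddiam d S" unfolding ddiam_def by (rule Sup_upper) (use a in blast)
  then have "ereal (d x y) \<le> ereal \<delta>" using a(1) by (rule order_trans)
  then show ?thesis by simp
qed

lemma product_cover_bound:
  fixes E :: "('a::metric_space \<times> 'b::metric_space) set"
  assumes P: "finite P" "\<forall>p\<in>P. \<forall>q\<in>P. p \<noteq> q \<longrightarrow> \<delta> < dist p q"
    "\<forall>p\<in>P. ereal c \<le> cover_num dist \<delta> (fiber E p)"
    and C: "finite C" "E \<subseteq> \<Union>C" "\<forall>S\<in>C. ddiam max_dist S \<le> ereal \<delta>"
  shows "real (card P) * c \<le> real (card C)"
proof -
  define Cp where "Cp p = {S\<in>C. \<exists>y. (p,y)\<in>S}" for p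
  define T where "T p S = snd ` (S \<inter> ({p}\<times>UNIV))" for p and S :: "('a \<times> 'b) set"
  have finCp: "finite (Cp p)" for p using C(1) unfolding Cp_def by auto
  have c_le: "c \<le> real (card (Cp p))" if "p \<in> P" for p
  proof -
    have "c \<le> real (card (T p ` Cp p))"
    proof (rule cover_num_geD[OF P(3)[rule_format, OF that]])
      show "finite (T p ` Cp p)" using finCp by auto
      show "fiber E p \<subseteq> \<Union> (T p ` Cp p)"
      proof
        fix y assume "y \<in> fiber E p"
        then have "(p,y) \<in> E" by (simp add: fiber_def)
        then obtain S where "S \<in> C" "(p,y) \<in> S" using C(2) by blast
        then have "S \<in> Cp p" unfolding Cp_def by blast
        moreover have "y \<in> T p S" unfolding T_def using \<open>(p,y) \<in> S\<close> by force
        ultimately show "y \<in> \<Union> (T p ` Cp p)" by blast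
      qed
      show "\<forall>S\<in>T p ` Cp p. ddiam dist S \<le> ereal \<delta>"
      proof
        fix S' assume "S' \<in> T p ` Cp p"
        then obtain S where S: "S \<in> C" "S' = T p S" unfolding Cp_def by auto
        show "ddiam dist S' \<le> ereal \<delta>"
        proof (rule ddiam_le)
          fix y y' assume "y \<in> S'" "y' \<in> S'"
          then have "(p,y) \<in> S" "(p,y') \<in> S" using S unfolding T_def by auto
          then have "max_dist (p,y) (p,y') \<le> \<delta>" by (intro ddiam_leD[OF C(3)[rule_format, OF S(1)]])
          then show "dist y y' \<le> \<delta>" by (simp add: max_dist_def)
        qed
      qed
    qed
    also have "\<dots> \<le> real (card (Cp p))" using card_image_le[OF finCp] by simp
    finally show ?thesis .
  qed
  have disj: "Cp p \<inter> Cp q = {}" if "p \<in> P" "q \<in> P" "p \<noteq> q" for p q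
  proof (rule ccontr)
    assume "Cp p \<inter> Cp q \<noteq> {}"
    then obtain S y y' where S: "S \<in> C" "(p,y) \<in> S" "(q,y') \<in> S" unfolding Cp_def by auto
    have "max_dist (p,y) (q,y') \<le> \<delta>" by (rule ddiam_leD[OF C(3)[rule_format, OF S(1)] S(2,3)])
    then have "dist p q \<le> \<delta>" by (simp add: max_dist_def)
    with P(2) that show False by fastforce
  qed
  have "real (card P) * c = (\<Sum>p\<in>P. c)" by simp
  also have "\<dots> \<le> (\<Sum>p\<in>P. real (card (Cp p)))" by (rule sum_mono) (rule c_le)
  also have "\<dots> = real (\<Sum>p\<in>P. card (Cp p))" by simp
  also have "(\<Sum>p\<in>P. card (Cp p)) = card (\<Union>p\<in>P. Cp p)"
    by (rule card_UN_disjoint[symmetric]) (use P(1) finCp disj in auto)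
  also have "card (\<Union>p\<in>P. Cp p) \<le> card C"
    by (rule card_mono[OF C(1)]) (auto simp: Cp_def)
  finally show ?thesis by simp
qed

lemma net_cover_bound:
  fixes A :: "'a::metric_space set"
  assumes "finite P" "P \<subseteq> A" "\<forall>a\<in>A. \<exists>p\<in>P. dist a p \<le> \<delta>"
  shows "cover_num dist (2*\<delta>) A \<le> ereal (real (card P))"
proof -
  define C where "C = (\<lambda>p. {a\<in>A. dist a p \<le> \<delta>}) ` P"
  have "cover_num dist (2*\<delta>) A \<le> ereal (real (card C))"
  proof (rule cover_num_le)
    show "finite C" using assms(1) by (simp add: C_def)
    show "A \<subseteq> \<Union> C" using assms(3) by (auto simp: C_def)
    show "\<forall>S\<in>C. ddiam dist S \<le> ereal (2 * \<delta>)"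
    proof
      fix S assume "S \<in> C"
      then obtain p where S: "S = {a\<in>A. dist a p \<le> \<delta>}" by (auto simp: C_def)
      show "ddiam dist S \<le> ereal (2 * \<delta>)"
      proof (rule ddiam_le)
        fix x y assume "x \<in> S" "y \<in> S"
        then have "dist x p \<le> \<delta>" "dist y p \<le> \<delta>" by (auto simp: S)
        then show "dist x y \<le> 2 * \<delta>" using dist_triangle2[of x y p] by simp
      qed
    qed
  qed
  also have "\<dots> \<le> ereal (real (card P))" using card_image_le[OF assms(1)] by (simp add: C_def)
  finally show ?thesis .
qed

lemma sep_dichotomy:
  fixes A :: "'a::metric_space set"
  assumes "0 \<le> \<delta>"
  shows "(\<exists>P. finite P \<and> P \<subseteq> A \<and> (\<forall>p\<in>P. \<forall>q\<in>P. p \<noteq> q \<longrightarrow> \<delta> < dist p q) \<and> (\<forall>a\<in>A. \<exists>p\<in>P. dist a p \<le> \<delta>))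
       \<or> (\<forall>n. \<exists>P. finite P \<and> P \<subseteq> A \<and> (\<forall>p\<in>P. \<forall>q\<in>P. p \<noteq> q \<longrightarrow> \<delta> < dist p q) \<and> card P = n)"
proof (cases "\<exists>P. finite P \<and> P \<subseteq> A \<and> (\<forall>p\<in>P. \<forall>q\<in>P. p \<noteq> q \<longrightarrow> \<delta> < dist p q) \<and> (\<forall>a\<in>A. \<exists>p\<in>P. dist a p \<le> \<delta>)")
  case True then show ?thesis by (rule disjI1)
next
  case False
  note nomax = False
  show ?thesis
  proof (rule disjI2)
  show "\<forall>n. \<exists>P. finite P \<and> P \<subseteq> A \<and> (\<forall>p\<in>P. \<forall>q\<in>P. p \<noteq> q \<longrightarrow> \<delta> < dist p q) \<and> card P = n"
  proof
    fix n show "\<exists>P. finite P \<and> P \<subseteq> A \<and> (\<forall>p\<in>P. \<forall>q\<in>P. p \<noteq> q \<longrightarrow> \<delta> < dist p q) \<and> card P = n"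
    proof (induction n)
      case 0 show ?case by (intro exI[of _ "{}"]) auto
    next
      case (Suc n)
      then obtain P where P: "finite P" "P \<subseteq> A" "\<forall>p\<in>P. \<forall>q\<in>P. p \<noteq> q \<longrightarrow> \<delta> < dist p q" "card P = n" by blast
      have "\<not> (\<forall>a\<in>A. \<exists>p\<in>P. dist a p \<le> \<delta>)" using nomax P(1,2,3) by blast
      then obtain a where a: "a \<in> A" "\<forall>p\<in>P. \<not> dist a p \<le> \<delta>" by blast
      have "a \<notin> P"
      proof
        assume "a \<in> P" then have "\<not> dist a a \<le> \<delta>" using a(2) by blast
        then show False using assms by simp
      qed
      show ?case
      proof (intro exI[of _ "insert a P"] conjI)
        show "\<forall>p\<in>insert a P. \<forall>q\<in>insert a P. p \<noteq> q \<longrightarrow> \<delta> < dist p q"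
          using P(3) a(2) by (auto simp: dist_commute not_le)
      qed (use P a \<open>a \<notin> P\<close> in auto)
    qed
  qed
  qed
qed

lemma key_log_bound:
  fixes E :: "('a::metric_space \<times> 'b::metric_space) set" and A :: "'a set"
  assumes "A \<noteq> {}" "1 \<le> c" "0 \<le> \<delta>" "\<forall>x\<in>A. ereal c \<le> cover_num dist \<delta> (fiber E x)"
  shows "log_cover_num dist (2*\<delta>) A + ereal (ln c) \<le> log_cover_num max_dist \<delta> E"
  using sep_dichotomy[of \<delta> A, OF assms(3)]
proof
  assume "\<exists>P. finite P \<and> P \<subseteq> A \<and> (\<forall>p\<in>P. \<forall>q\<in>P. p \<noteq> q \<longrightarrow> \<delta> < dist p q) \<and> (\<forall>a\<in>A. \<exists>p\<in>P. dist a p \<le> \<delta>)"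
  then obtain P where P: "finite P" "P \<subseteq> A" "\<forall>p\<in>P. \<forall>q\<in>P. p \<noteq> q \<longrightarrow> \<delta> < dist p q" "\<forall>a\<in>A. \<exists>p\<in>P. dist a p \<le> \<delta>"
    by blast
  have "P \<noteq> {}" using P(4) assms(1) by blast
  then have cP: "1 \<le> real (card P)" using P(1) by (simp add: Suc_le_eq card_gt_0_iff)
  have NA: "cover_num dist (2*\<delta>) A \<le> ereal (real (card P))" by (rule net_cover_bound[OF P(1,2,4)])
  obtain a where a: "cover_num dist (2*\<delta>) A = ereal a" "0 \<le> a" "a \<le> real (card P)"
    using NA cover_num_nonneg[of dist "2*\<delta>" A] by (cases "cover_num dist (2*\<delta>) A") auto
  have lA: "log_cover_num dist (2*\<delta>) A \<le> ereal (ln (real (card P)))"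
    using a cP by (simp add: log_cover_num_def)
  have NE: "ereal (real (card P) * c) \<le> cover_num max_dist \<delta> E"
  proof (rule cover_num_ge)
    fix C assume C: "finite C" "E \<subseteq> \<Union>C" "\<forall>S\<in>C. ddiam max_dist S \<le> ereal \<delta>"
    have "\<forall>p\<in>P. ereal c \<le> cover_num dist \<delta> (fiber E p)" using P(2) assms(4) by blast
    from product_cover_bound[OF P(1,3) this C] show "real (card P) * c \<le> real (card C)" .
  qed
  show ?thesis
  proof (cases "cover_num max_dist \<delta> E = \<infinity>")
    case True then show ?thesis by (simp add: log_cover_num_def)
  next
    case False
    then obtain b where b: "cover_num max_dist \<delta> E = ereal b" "real (card P) * c \<le> b"
      using NE by (cases "cover_num max_dist \<delta> E") auto
    have pos: "1 \<le> real (card P) * c" proof -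
      have "1*1 \<le> real (card P) * c" by (rule mult_mono) (use cP assms(2) in auto)
      then show ?thesis by simp
    qed
    have "ln (real (card P)) + ln c = ln (real (card P) * c)" using cP assms(2) by (simp add: ln_mult)
    also have "\<dots> \<le> ln (max 1 b)"
    proof (rule ln_mono)
      show "0 < real (card P) * c" using pos by linarith
      show "real (card P) * c \<le> max 1 b" using b(2) by linarith
    qed
    finally have "ereal (ln (real (card P))) + ereal (ln c) \<le> log_cover_num max_dist \<delta> E"
      using b by (simp add: log_cover_num_def)
    have "log_cover_num dist (2*\<delta>) A + ereal (ln c) \<le> ereal (ln (real (card P))) + ereal (ln c)"
      by (rule add_right_mono[OF lA])
    then show ?thesis using \<open>ereal (ln (real (card P))) + ereal (ln c) \<le> _\<close> by (rule order_trans)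
  qed
next
  assume H: "\<forall>n. \<exists>P. finite P \<and> P \<subseteq> A \<and> (\<forall>p\<in>P. \<forall>q\<in>P. p \<noteq> q \<longrightarrow> \<delta> < dist p q) \<and> card P = n"
  have "ereal (real n) \<le> cover_num max_dist \<delta> E" for n
  proof -
    obtain P where P: "finite P" "P \<subseteq> A" "\<forall>p\<in>P. \<forall>q\<in>P. p \<noteq> q \<longrightarrow> \<delta> < dist p q" "card P = n"
      using H[rule_format, of n] by (elim exE conjE) (rule that; assumption)
    have "ereal (real (card P) * c) \<le> cover_num max_dist \<delta> E"
    proof (rule cover_num_ge)
    fix C assume C: "finite C" "E \<subseteq> \<Union>C" "\<forall>S\<in>C. ddiam max_dist S \<le> ereal \<delta>"
    have "\<forall>p\<in>P. ereal c \<le> cover_num dist \<delta> (fiber E p)" using P(2) assms(4) by blast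
    from product_cover_bound[OF P(1,3) this C] show "real (card P) * c \<le> real (card C)" .
  qed
    moreover have "real n \<le> real (card P) * c" proof -
      have "real n * 1 \<le> real (card P) * c" by (rule mult_mono) (use P(4) assms(2) in simp_all)
      then show ?thesis by simp
    qed
    ultimately show ?thesis by (meson ereal_less_eq(3) order_trans)
  qed
  have "cover_num max_dist \<delta> E = \<infinity>"
  proof (rule ccontr)
    assume "cover_num max_dist \<delta> E \<noteq> \<infinity>"
    then obtain b where b: "cover_num max_dist \<delta> E = ereal b"
      using cover_num_nonneg[of max_dist \<delta> E] by (cases "cover_num max_dist \<delta> E") auto
    obtain n :: nat where "b < real n" using reals_Archimedean2 by blast
    with \<open>\<And>n. ereal (real n) \<le> cover_num max_dist \<delta> E\<close>[of n] b show False by simp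
  qed
  then show ?thesis by (simp add: log_cover_num_def)
qed



lemma ev_at_right_double:
  "eventually (\<lambda>u. Q (2*u)) (at_right (0::real)) \<longleftrightarrow> eventually Q (at_right 0)"
proof
  assume "eventually (\<lambda>u. Q (2*u)) (at_right (0::real))"
  then obtain b where b: "b > 0" "\<And>y. y > 0 \<Longrightarrow> y < b \<Longrightarrow> Q (2*y)" by (auto simp: eventually_at_right_field)
  show "eventually Q (at_right 0)" unfolding eventually_at_right_field
  proof (intro exI[of _ "2*b"] conjI allI impI)
    fix y :: real assume "0 < y" "y < 2*b"
    then have "Q (2*(y/2))" by (intro b(2)) auto
    then show "Q y" by simp
  qed (use b in auto)
next
  assume "eventually Q (at_right 0)"
  then obtain b where b: "b > 0" "\<And>y. y > 0 \<Longrightarrow> y < b \<Longrightarrow> Q y" by (auto simp: eventually_at_right_field)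
  show "eventually (\<lambda>u. Q (2*u)) (at_right (0::real))" unfolding eventually_at_right_field
    by (intro exI[of _ "b/2"] conjI allI impI b(2)) (use b(1) in auto)
qed

lemma freq_at_right_double:
  "frequently Q (at_right (0::real)) \<Longrightarrow> frequently (\<lambda>u. Q (2*u)) (at_right (0::real))"
  unfolding frequently_def using ev_at_right_double[of "\<lambda>x. \<not> Q x"] by simp

lemma ev_ln_small: "eventually (\<lambda>\<delta>::real. ln \<delta> < Z) (at_right 0)"
  using ln_at_0 unfolding filterlim_at_bot_dense by blast

lemma ev_pos_small: "eventually (\<lambda>\<delta>::real. 0 < \<delta> \<and> \<delta> < b) (at_right 0)" if "b > 0"
  using that unfolding eventually_at_right_field by auto

lemma core_step:
  fixes f g :: "real \<Rightarrow> ereal"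
  assumes s: "0 \<le> s" and r: "r < y' + s"
    and ev: "eventually (\<lambda>\<delta>. f (2*\<delta>) + ereal (s*\<bar>ln \<delta>\<bar>) \<le> g \<delta>) (at_right 0)"
  shows "eventually (\<lambda>\<delta>. ereal y' < f (2*\<delta>) / ereal \<bar>ln (2*\<delta>)\<bar> \<longrightarrow> ereal r < g \<delta> / ereal \<bar>ln \<delta>\<bar>) (at_right 0)"
proof -
  define K where "K = max 1 (\<bar>y'\<bar> * ln 2 / (y' + s - r)) + 1"
  have Kpos: "K > 1" by (simp add: K_def)
  have "eventually (\<lambda>\<delta>. (0 < \<delta> \<and> \<delta> < 1/2) \<and> ln \<delta> < -K \<and> f (2*\<delta>) + ereal (s*\<bar>ln \<delta>\<bar>) \<le> g \<delta>) (at_right 0)"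
    by (intro eventually_conj ev ev_ln_small ev_pos_small) auto
  then show ?thesis
  proof (rule eventually_mono, intro impI)
    fix \<delta> :: real
    assume H: "(0 < \<delta> \<and> \<delta> < 1/2) \<and> ln \<delta> < -K \<and> f (2*\<delta>) + ereal (s*\<bar>ln \<delta>\<bar>) \<le> g \<delta>"
      and Y: "ereal y' < f (2*\<delta>) / ereal \<bar>ln (2*\<delta>)\<bar>"
    define L where "L = - ln \<delta>"
    have L: "\<bar>ln \<delta>\<bar> = L" "L > K" using H Kpos by (auto simp: L_def)
    have l2: "ln (2*\<delta>) = ln 2 + ln \<delta>" using H by (simp add: ln_mult)
    have "ln (2*\<delta>) < 0" using H by simp
    then have L2: "\<bar>ln (2*\<delta>)\<bar> = L - ln 2" "L - ln 2 > 0" using l2 by (auto simp: L_def)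
    have KL: "\<bar>y'\<bar> * ln 2 \<le> (y' + s - r) * L"
    proof -
      have pos: "y' + s - r > 0" using r by simp
      have "\<bar>y'\<bar> * ln 2 / (y' + s - r) \<le> L" using L(2) by (simp add: K_def)
      then show ?thesis using pos by (simp add: divide_le_eq mult.commute)
    qed
    have Lpos: "L > 0" using L Kpos by simp
    show "ereal r < g \<delta> / ereal \<bar>ln \<delta>\<bar>"
    proof (cases "f (2*\<delta>)")
      case (real a)
      have "y' < a / (L - ln 2)" using Y L2 real by simp
      then have a: "y' * (L - ln 2) < a" using L2(2) by (simp add: less_divide_eq)
      have ineq: "r * L < a + s * L"
      proof -
        have "y' * ln 2 \<le> \<bar>y'\<bar> * ln 2" by (intro mult_right_mono) auto
        moreover have "(y' + s - r) * L = y' * L + s * L - r * L" "y' * (L - ln 2) = y' * L - y' * ln 2"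
          by (simp_all add: algebra_simps)
        ultimately have "r * L \<le> y' * (L - ln 2) + s * L" using KL by linarith
        then show ?thesis using a by linarith
      qed
      show ?thesis
      proof (cases "g \<delta>")
        case (real b)
        have "a + s * L \<le> b" using H \<open>f (2*\<delta>) = ereal a\<close> real L(1) by simp
        then have "r * L < b" using ineq by linarith
        then have "r < b / L" using Lpos by (simp add: less_divide_eq)
        moreover have "ereal b / ereal L = ereal (b / L)" using Lpos by simp
        ultimately show ?thesis using real L(1) by simp
      next
        case PInf then show ?thesis using Lpos L(1) by simp
      next
        case MInf then show ?thesis using H \<open>f (2*\<delta>) = ereal a\<close> by simp
      qed
    next
      case PInf
      then have "g \<delta> = \<infinity>" using H by simp
      then show ?thesis using Lpos L(1) by simp
    next
      case MInf
      then show ?thesis using Y L2 by simp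
    qed
  qed
qed



lemma base_step:
  fixes f g :: "real \<Rightarrow> ereal"
  assumes f: "\<And>\<delta>. 0 \<le> f \<delta>"
    and ev: "eventually (\<lambda>\<delta>. f (2*\<delta>) + ereal (s*\<bar>ln \<delta>\<bar>) \<le> g \<delta>) (at_right 0)"
  shows "eventually (\<lambda>\<delta>. ereal s \<le> g \<delta> / ereal \<bar>ln \<delta>\<bar>) (at_right 0)"
proof -
  have "eventually (\<lambda>\<delta>. (0 < \<delta> \<and> \<delta> < 1) \<and> f (2*\<delta>) + ereal (s*\<bar>ln \<delta>\<bar>) \<le> g \<delta>) (at_right 0)"
    by (intro eventually_conj ev ev_pos_small) auto
  then show ?thesis
  proof (rule eventually_mono)
    fix \<delta> :: real assume H: "(0 < \<delta> \<and> \<delta> < 1) \<and> f (2*\<delta>) + ereal (s*\<bar>ln \<delta>\<bar>) \<le> g \<delta>"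
    have Lp: "0 < \<bar>ln \<delta>\<bar>" using H by simp
    have "ereal (s*\<bar>ln \<delta>\<bar>) \<le> f (2*\<delta>) + ereal (s*\<bar>ln \<delta>\<bar>)"
      using f[of "2*\<delta>"] by (simp add: add_increasing)
    then have "ereal (s*\<bar>ln \<delta>\<bar>) \<le> g \<delta>" using H by (meson order_trans)
    then have "ereal (s*\<bar>ln \<delta>\<bar>) / ereal \<bar>ln \<delta>\<bar> \<le> g \<delta> / ereal \<bar>ln \<delta>\<bar>"
      using Lp by (intro ereal_divide_right_mono) auto
    moreover have "ereal (s*\<bar>ln \<delta>\<bar>) / ereal \<bar>ln \<delta>\<bar> = ereal s" using Lp by simp
    ultimately show "ereal s \<le> g \<delta> / ereal \<bar>ln \<delta>\<bar>" by simp
  qed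
qed

lemma liminf_shift:
  fixes f g :: "real \<Rightarrow> ereal"
  assumes s: "0 \<le> s" and f: "\<And>\<delta>. 0 \<le> f \<delta>"
    and ev: "eventually (\<lambda>\<delta>. f (2*\<delta>) + ereal (s*\<bar>ln \<delta>\<bar>) \<le> g \<delta>) (at_right 0)"
  shows "Liminf (at_right 0) (\<lambda>\<delta>. f \<delta> / ereal \<bar>ln \<delta>\<bar>) + ereal s \<le> Liminf (at_right 0) (\<lambda>\<delta>. g \<delta> / ereal \<bar>ln \<delta>\<bar>)"
  unfolding le_Liminf_iff
proof (intro allI impI)
  fix y assume y: "y < Liminf (at_right 0) (\<lambda>\<delta>. f \<delta> / ereal \<bar>ln \<delta>\<bar>) + ereal s"
  define LF where "LF = Liminf (at_right 0) (\<lambda>\<delta>. f \<delta> / ereal \<bar>ln \<delta>\<bar>)"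
  have base: "eventually (\<lambda>\<delta>. ereal s \<le> g \<delta> / ereal \<bar>ln \<delta>\<bar>) (at_right 0)" by (rule base_step[OF f ev])
  show "eventually (\<lambda>\<delta>. y < g \<delta> / ereal \<bar>ln \<delta>\<bar>) (at_right 0)"
  proof (cases "y < ereal s")
    case True then show ?thesis using base by (auto elim: eventually_mono)
  next
    case False
    have "y \<noteq> \<infinity>" using y by auto
    then obtain r where r: "y = ereal r" "s \<le> r" using False by (cases y) auto
    have "ereal (r - s) < LF"
    proof (cases LF)
      case (real l) then show ?thesis using y r by (simp add: LF_def)
    next
      case PInf then show ?thesis by simp
    next
      case MInf then show ?thesis using y r by (simp add: LF_def)
    qed
    then obtain y' where y': "r - s < y'" "ereal y' < LF" using ereal_dense2 by force
    have e1: "eventually (\<lambda>\<delta>. ereal y' < f \<delta> / ereal \<bar>ln \<delta>\<bar>) (at_right 0)"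
      using less_LiminfD[OF y'(2)[unfolded LF_def]] .
    have e2: "eventually (\<lambda>\<delta>. ereal y' < f (2*\<delta>) / ereal \<bar>ln (2*\<delta>)\<bar>) (at_right 0)"
      using e1 ev_at_right_double[of "\<lambda>\<delta>. ereal y' < f \<delta> / ereal \<bar>ln \<delta>\<bar>"] by simp
    show ?thesis using eventually_conj[OF e2 core_step[OF s _ ev, of r y']] y'(1) r(1)
      by (auto elim: eventually_mono)
  qed
qed

lemma limsup_shift:
  fixes f g :: "real \<Rightarrow> ereal"
  assumes s: "0 \<le> s" and f: "\<And>\<delta>. 0 \<le> f \<delta>"
    and ev: "eventually (\<lambda>\<delta>. f (2*\<delta>) + ereal (s*\<bar>ln \<delta>\<bar>) \<le> g \<delta>) (at_right 0)"
  shows "Limsup (at_right 0) (\<lambda>\<delta>. f \<delta> / ereal \<bar>ln \<delta>\<bar>) + ereal s \<le> Limsup (at_right 0) (\<lambda>\<delta>. g \<delta> / ereal \<bar>ln \<delta>\<bar>)"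
proof (rule ccontr)
  define LF where "LF = Limsup (at_right 0) (\<lambda>\<delta>. f \<delta> / ereal \<bar>ln \<delta>\<bar>)"
  define LG where "LG = Limsup (at_right 0) (\<lambda>\<delta>. g \<delta> / ereal \<bar>ln \<delta>\<bar>)"
  assume "\<not> LF + ereal s \<le> LG"
  then have "LG < LF + ereal s" unfolding LF_def LG_def by simp
  then obtain y where y: "LG < y" "y < LF + ereal s" using dense by blast
  have eG: "eventually (\<lambda>\<delta>. g \<delta> / ereal \<bar>ln \<delta>\<bar> < y) (at_right 0)"
    using Limsup_lessD[OF y(1)[unfolded LG_def]] .
  have base: "eventually (\<lambda>\<delta>. ereal s \<le> g \<delta> / ereal \<bar>ln \<delta>\<bar>) (at_right 0)" by (rule base_step[OF f ev])
  show False
  proof (cases "y \<le> ereal s")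
    case True
    have "eventually (\<lambda>\<delta>. False) (at_right (0::real))"
    proof (rule eventually_mono[OF eventually_conj[OF eG base]])
      fix x assume "g x / ereal \<bar>ln x\<bar> < y \<and> ereal s \<le> g x / ereal \<bar>ln x\<bar>"
      then show False using True by (meson leD order_trans)
    qed
    then show False by simp
  next
    case False
    have "y \<noteq> \<infinity>" using y by auto
    then obtain r where r: "y = ereal r" "s < r" using False by (cases y) auto
    have "ereal (r - s) < LF"
    proof (cases LF)
      case (real l) then show ?thesis using y r by simp
    next
      case PInf then show ?thesis by simp
    next
      case MInf then show ?thesis using y r by simp
    qed
    then obtain y' where y': "r - s < y'" "ereal y' < LF" using ereal_dense2 by force
    have f1: "frequently (\<lambda>\<delta>. ereal y' < f \<delta> / ereal \<bar>ln \<delta>\<bar>) (at_right 0)"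
    proof (rule ccontr)
      assume "\<not> ?thesis"
      then have "eventually (\<lambda>\<delta>. f \<delta> / ereal \<bar>ln \<delta>\<bar> \<le> ereal y') (at_right 0)"
        unfolding frequently_def by (simp add: not_less)
      then have "LF \<le> ereal y'" unfolding LF_def by (rule Limsup_bounded)
      then show False using y'(2) by simp
    qed
    have f2: "frequently (\<lambda>\<delta>. ereal y' < f (2*\<delta>) / ereal \<bar>ln (2*\<delta>)\<bar>) (at_right 0)"
      using freq_at_right_double[OF f1] by simp
    have "frequently (\<lambda>\<delta>. ereal y' < f (2*\<delta>) / ereal \<bar>ln (2*\<delta>)\<bar> \<and>
        ((ereal y' < f (2*\<delta>) / ereal \<bar>ln (2*\<delta>)\<bar> \<longrightarrow> ereal r < g \<delta> / ereal \<bar>ln \<delta>\<bar>) \<and> g \<delta> / ereal \<bar>ln \<delta>\<bar> < y)) (at_right 0)"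
      using y'(1) by (intro frequently_eventually_frequently[OF f2] eventually_conj core_step[OF s _ ev] eG) auto
    then have "frequently (\<lambda>\<delta>. False) (at_right (0::real))"
      by (rule frequently_elim1) (use r in auto)
    then show False by simp
  qed
qed



lemma ev_div_mono:
  fixes f g :: "real \<Rightarrow> ereal"
  assumes "\<And>\<delta>. 0 < \<delta> \<Longrightarrow> \<delta> < 1 \<Longrightarrow> f \<delta> \<le> g \<delta>"
  shows "eventually (\<lambda>\<delta>. f \<delta> / ereal \<bar>ln \<delta>\<bar> \<le> g \<delta> / ereal \<bar>ln \<delta>\<bar>) (at_right 0)"
  using ev_pos_small[of 1] by (auto elim!: eventually_mono intro!: ereal_divide_right_mono assms)

lemma lower_box_dim_mono: "E \<subseteq> F \<Longrightarrow> lower_box_dim d E \<le> lower_box_dim d F"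
  unfolding lower_box_dim_def by (intro Liminf_mono ev_div_mono log_cover_num_mono)

lemma upper_box_dim_mono: "E \<subseteq> F \<Longrightarrow> upper_box_dim d E \<le> upper_box_dim d F"
  unfolding upper_box_dim_def by (intro Limsup_mono ev_div_mono log_cover_num_mono)

lemma lower_box_dim_nonneg: "0 \<le> lower_box_dim d E"
proof -
  have "eventually (\<lambda>\<delta>. (\<lambda>_. 0) \<delta> / ereal \<bar>ln \<delta>\<bar> \<le> log_cover_num d \<delta> E / ereal \<bar>ln \<delta>\<bar>) (at_right 0)"
    by (rule ev_div_mono) (rule log_cover_num_nonneg)
  then show ?thesis unfolding lower_box_dim_def by (intro Liminf_bounded) simp
qed

lemma upper_box_dim_nonneg: "0 \<le> upper_box_dim d E"
  using lower_box_dim_nonneg[of d E] Liminf_le_Limsup[of "at_right (0::real)"]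
  unfolding lower_box_dim_def upper_box_dim_def by (meson order_trans trivial_limit_at_right_real)

lemma lower_box_dim_empty: "lower_box_dim d {} = 0"
  unfolding lower_box_dim_def log_cover_num_empty by (simp add: Liminf_const)

lemma upper_box_dim_empty: "upper_box_dim d {} = 0"
  unfolding upper_box_dim_def log_cover_num_empty by (simp add: Limsup_const)

lemma asym:
  fixes E :: "('a::metric_space \<times> 'b::metric_space) set" and A :: "'a set"
  assumes A: "A \<noteq> {}" and s: "0 \<le> s" and d0: "\<delta>0 > 0"
    and H: "\<forall>\<delta>. 0 < \<delta> \<longrightarrow> \<delta> < \<delta>0 \<longrightarrow> (\<forall>x\<in>A. ereal (\<delta> powr (-s)) \<le> cover_num dist \<delta> (fiber E x))"
  shows "lower_box_dim dist A + ereal s \<le> lower_box_dim max_dist E"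
    and "upper_box_dim dist A + ereal s \<le> upper_box_dim max_dist E"
proof -
  have ev: "eventually (\<lambda>\<delta>. log_cover_num dist (2*\<delta>) A + ereal (s*\<bar>ln \<delta>\<bar>) \<le> log_cover_num max_dist \<delta> E) (at_right 0)"
  proof (rule eventually_mono[OF ev_pos_small[of "min \<delta>0 1"]])
    show "0 < min \<delta>0 1" using d0 by simp
    fix \<delta> :: real assume "0 < \<delta> \<and> \<delta> < min \<delta>0 1"
    then have d: "0 < \<delta>" "\<delta> < \<delta>0" "\<delta> < 1" by auto
    have lnc: "ln (\<delta> powr (-s)) = s * \<bar>ln \<delta>\<bar>" using d by (simp add: ln_powr)
    have "1 \<le> \<delta> powr (-s)"
    proof -
      have "0 \<le> ln (\<delta> powr (-s))" using lnc s by simp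
      moreover have pos: "0 < \<delta> powr (-s)" using d by simp
      ultimately show ?thesis using ln_ge_zero_iff[OF pos] by blast
    qed
    from key_log_bound[OF A this, of \<delta> E] H d lnc
    show "log_cover_num dist (2*\<delta>) A + ereal (s*\<bar>ln \<delta>\<bar>) \<le> log_cover_num max_dist \<delta> E" by simp
  qed
  show "lower_box_dim dist A + ereal s \<le> lower_box_dim max_dist E"
    unfolding lower_box_dim_def by (rule liminf_shift[OF s log_cover_num_nonneg ev])
  show "upper_box_dim dist A + ereal s \<le> upper_box_dim max_dist E"
    unfolding upper_box_dim_def by (rule limsup_shift[OF s log_cover_num_nonneg ev])
qed

lemma max_helper: "1 \<le> (e::real) \<Longrightarrow> e < max 1 N \<Longrightarrow> e \<le> N"
  by (simp add: max_def split: if_splits)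

lemma lb_to_cover:
  assumes s: "0 \<le> s" and l: "ereal s < lower_box_dim d S"
  shows "\<exists>\<delta>0>0. \<forall>\<delta>. 0 < \<delta> \<longrightarrow> \<delta> < \<delta>0 \<longrightarrow> ereal (\<delta> powr (-s)) \<le> cover_num d \<delta> S"
proof -
  have "eventually (\<lambda>\<delta>. ereal s < log_cover_num d \<delta> S / ereal \<bar>ln \<delta>\<bar>) (at_right 0)"
    using less_LiminfD[OF l[unfolded lower_box_dim_def]] .
  then have "eventually (\<lambda>\<delta>. ereal (\<delta> powr (-s)) \<le> cover_num d \<delta> S) (at_right 0)"
  proof (rule eventually_mono[OF eventually_conj[OF _ ev_pos_small[of 1]]])
    fix \<delta> :: real assume "ereal s < log_cover_num d \<delta> S / ereal \<bar>ln \<delta>\<bar> \<and> 0 < \<delta> \<and> \<delta> < 1"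
    then have d: "0 < \<delta>" "\<delta> < 1" and lt: "ereal s < log_cover_num d \<delta> S / ereal \<bar>ln \<delta>\<bar>" by auto
    define L where "L = \<bar>ln \<delta>\<bar>"
    have L: "L > 0" "\<delta> powr (-s) = exp (s * L)" using d by (auto simp: L_def powr_def)
    show "ereal (\<delta> powr (-s)) \<le> cover_num d \<delta> S"
    proof (cases "cover_num d \<delta> S")
      case (real N)
      have "ln \<delta> < 0" using d by simp
      then have "s < ln (max 1 N) / L" using lt real by (simp add: log_cover_num_def L_def)
      then have "s * L < ln (max 1 N)" using L by (simp add: less_divide_eq)
      then have "exp (s * L) < max 1 N" by (metis exp_less_cancel_iff exp_ln less_max_iff_disj max.strict_order_iff zero_less_one)
      moreover have "1 \<le> exp (s * L)" using s L by simp
      ultimately have "exp (s * L) \<le> N" by (rule max_helper[rotated])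
      then show ?thesis using real L by simp
    next
      case PInf then show ?thesis by simp
    next
      case MInf then show ?thesis using cover_num_nonneg[of d \<delta> S] by simp
    qed
  qed simp
  then show ?thesis unfolding eventually_at_right_field by auto
qed

lemma nonempty_to_cover:
  assumes "S \<noteq> {}"
  shows "\<forall>\<delta>. 0 < \<delta> \<longrightarrow> \<delta> < 1 \<longrightarrow> ereal (\<delta> powr (-0)) \<le> cover_num d \<delta> S"
  using cover_num_nonempty[OF assms] by simp



lemma log_cover_num_le_real:
  assumes "cover_num d \<delta> E \<le> ereal x"
  shows "log_cover_num d \<delta> E \<le> ereal (ln (max 1 x))"
proof -
  obtain n where n: "cover_num d \<delta> E = ereal n" "0 \<le> n" "n \<le> x"
    using assms cover_num_nonneg[of d \<delta> E] by (cases "cover_num d \<delta> E") auto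
  then show ?thesis by (simp add: log_cover_num_def)
qed

lemma exists_cover: "cover_num d \<delta> E \<noteq> \<infinity> \<Longrightarrow> \<exists>C. finite C \<and> E \<subseteq> \<Union>C \<and> (\<forall>S\<in>C. ddiam d S \<le> ereal \<delta>)"
  using cover_num_none by blast

lemma ln_sum_bound:
  fixes a b :: real assumes "0 \<le> a" "0 \<le> b"
  shows "ln (max 1 (a+b)) \<le> ln 2 + max (ln (max 1 a)) (ln (max 1 b))"
proof -
  define m where "m = max (max 1 a) (max 1 b)"
  have m1: "1 \<le> m" by (simp add: m_def)
  have "max 1 (a+b) \<le> 2*m" using assms by (simp add: m_def max_def)
  then have "ln (max 1 (a+b)) \<le> ln (2*m)" using m1 by (intro ln_mono) auto
  also have "\<dots> = ln 2 + ln m" using m1 by (simp add: ln_mult)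
  also have "ln m = max (ln (max 1 a)) (ln (max 1 b))"
    unfolding m_def by (cases "max 1 a \<le> max 1 b") (simp_all add: max_def)
  finally show ?thesis .
qed

lemma div_max_helper:
  assumes L: "0 < (L::real)"
  shows "ereal (x + max P Q) / ereal L = ereal (x / L) + max (ereal (P / L)) (ereal (Q / L))"
proof (cases "P \<le> Q")
  case True
  then have "P/L \<le> Q/L" using L by (simp add: divide_right_mono)
  then show ?thesis using True L by (simp add: max_def add_divide_distrib)
next
  case False
  then have "Q/L \<le> P/L" using L by (simp add: divide_right_mono)
  then show ?thesis using False L by (simp add: max_def add_divide_distrib)
qed

lemma log_union_bound:
  assumes d: "0 < \<delta>" "\<delta> < 1"
  shows "log_cover_num d \<delta> (A \<union> B) / ereal \<bar>ln \<delta>\<bar> \<le>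
    ereal (ln 2 / \<bar>ln \<delta>\<bar>) + max (log_cover_num d \<delta> A / ereal \<bar>ln \<delta>\<bar>) (log_cover_num d \<delta> B / ereal \<bar>ln \<delta>\<bar>)"
proof -
  define L where "L = \<bar>ln \<delta>\<bar>"
  have L: "0 < L" using d by (simp add: L_def)
  show ?thesis
  proof (cases "cover_num d \<delta> A = \<infinity> \<or> cover_num d \<delta> B = \<infinity>")
    case True
    then have "max (log_cover_num d \<delta> A / ereal L) (log_cover_num d \<delta> B / ereal L) = \<infinity>"
      using L by (auto simp: log_cover_num_def max_def)
    then show ?thesis by (simp add: L_def)
  next
    case False
    then obtain C1 C2 where C1: "finite C1" "A \<subseteq> \<Union>C1" "\<forall>S\<in>C1. ddiam d S \<le> ereal \<delta>" "cover_num d \<delta> A = ereal (real (card C1))"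
      and C2: "finite C2" "B \<subseteq> \<Union>C2" "\<forall>S\<in>C2. ddiam d S \<le> ereal \<delta>" "cover_num d \<delta> B = ereal (real (card C2))"
      using cover_num_attained[OF exists_cover] by meson
    define a where "a = real (card C1)"
    define b where "b = real (card C2)"
    have "cover_num d \<delta> (A \<union> B) \<le> ereal (real (card (C1 \<union> C2)))"
      by (rule cover_num_le) (use C1 C2 in auto)
    also have "\<dots> \<le> ereal (a + b)" using card_Un_le[of C1 C2] by (simp add: a_def b_def)
    finally have "log_cover_num d \<delta> (A \<union> B) \<le> ereal (ln (max 1 (a+b)))" by (rule log_cover_num_le_real)
    also have "\<dots> \<le> ereal (ln 2 + max (ln (max 1 a)) (ln (max 1 b)))"
      using ln_sum_bound[of a b] by (simp add: a_def b_def)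
    finally have "log_cover_num d \<delta> (A \<union> B) / ereal L \<le> ereal (ln 2 + max (ln (max 1 a)) (ln (max 1 b))) / ereal L"
      using L by (intro ereal_divide_right_mono) auto
    also have "\<dots> = ereal (ln 2 / L) + max (ereal (ln (max 1 a) / L)) (ereal (ln (max 1 b) / L))"
      using div_max_helper[OF L] by simp
    finally have fin: "log_cover_num d \<delta> (A \<union> B) / ereal L \<le> ereal (ln 2 / L) + max (ereal (ln (max 1 a) / L)) (ereal (ln (max 1 b) / L))" .
    have "log_cover_num d \<delta> A = ereal (ln (max 1 a))" "log_cover_num d \<delta> B = ereal (ln (max 1 b))"
      using C1(4) C2(4) by (simp_all add: log_cover_num_def a_def b_def)
    then have "ereal (ln (max 1 a) / L) = log_cover_num d \<delta> A / ereal L"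
       "ereal (ln (max 1 b) / L) = log_cover_num d \<delta> B / ereal L" using L by simp_all
    then show ?thesis using fin by (simp add: L_def)
  qed
qed

lemma upper_union: "upper_box_dim d (A \<union> B) \<le> max (upper_box_dim d A) (upper_box_dim d B)"
  unfolding Limsup_le_iff upper_box_dim_def
proof (intro allI impI)
  fix y assume y: "max (Limsup (at_right 0) (\<lambda>\<delta>. log_cover_num d \<delta> A / ereal \<bar>ln \<delta>\<bar>))
        (Limsup (at_right 0) (\<lambda>\<delta>. log_cover_num d \<delta> B / ereal \<bar>ln \<delta>\<bar>)) < y"
  then obtain y' where y': "max (Limsup (at_right 0) (\<lambda>\<delta>. log_cover_num d \<delta> A / ereal \<bar>ln \<delta>\<bar>))
        (Limsup (at_right 0) (\<lambda>\<delta>. log_cover_num d \<delta> B / ereal \<bar>ln \<delta>\<bar>)) < ereal y'" "ereal y' < y"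
    using ereal_dense2 by blast
  define \<epsilon> where "\<epsilon> = (if y = \<infinity> then 1 else real_of_ereal y - y')"
  have eps: "0 < \<epsilon>" "ereal (y' + \<epsilon>) \<le> y"
    using y'(2) by (cases y; simp add: \<epsilon>_def)+
  have eA: "eventually (\<lambda>\<delta>. log_cover_num d \<delta> A / ereal \<bar>ln \<delta>\<bar> < ereal y') (at_right 0)"
    using y'(1) by (intro Limsup_lessD) simp
  have eB: "eventually (\<lambda>\<delta>. log_cover_num d \<delta> B / ereal \<bar>ln \<delta>\<bar> < ereal y') (at_right 0)"
    using y'(1) by (intro Limsup_lessD) simp
  have eL: "eventually (\<lambda>\<delta>. ln \<delta> < - (ln 2 / \<epsilon>)) (at_right 0)" by (rule ev_ln_small)
  show "eventually (\<lambda>\<delta>. log_cover_num d \<delta> (A \<union> B) / ereal \<bar>ln \<delta>\<bar> < y) (at_right 0)"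
  proof (rule eventually_mono[OF eventually_conj[OF eventually_conj[OF eA eB] eventually_conj[OF eL ev_pos_small[of 1]]]])
    fix \<delta> :: real
    assume H: "(log_cover_num d \<delta> A / ereal \<bar>ln \<delta>\<bar> < ereal y' \<and> log_cover_num d \<delta> B / ereal \<bar>ln \<delta>\<bar> < ereal y') \<and>
       ln \<delta> < - (ln 2 / \<epsilon>) \<and> 0 < \<delta> \<and> \<delta> < 1"
    define L where "L = \<bar>ln \<delta>\<bar>"
    have L: "0 < L" "ln 2 / \<epsilon> < L" using H by (auto simp: L_def)
    have "ln 2 / L < \<epsilon>" using L eps(1) by (simp add: divide_less_eq mult.commute pos_divide_less_eq)
    have mx: "max (log_cover_num d \<delta> A / ereal L) (log_cover_num d \<delta> B / ereal L) < ereal y'"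
      using H unfolding L_def by (simp only: max_less_iff_conj)
    have "log_cover_num d \<delta> (A \<union> B) / ereal L \<le> ereal (ln 2 / L) + max (log_cover_num d \<delta> A / ereal L) (log_cover_num d \<delta> B / ereal L)"
      using log_union_bound[of \<delta> d A B] H by (simp add: L_def)
    also have "\<dots> < ereal (ln 2 / L) + ereal y'"
    proof (cases "max (log_cover_num d \<delta> A / ereal L) (log_cover_num d \<delta> B / ereal L)")
      case (real m) then show ?thesis using mx by simp
    next
      case PInf then show ?thesis using mx by simp
    next
      case MInf then show ?thesis by simp
    qed
    also have "\<dots> < ereal (y' + \<epsilon>)" using \<open>ln 2 / L < \<epsilon>\<close> by simp
    also have "\<dots> \<le> y" by (rule eps(2))
    finally show "log_cover_num d \<delta> (A \<union> B) / ereal \<bar>ln \<delta>\<bar> < y" by (simp add: L_def)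
  qed simp
qed

lemma upper_finite_union:
  fixes n :: nat and F :: "nat \<Rightarrow> 'a set"
  shows "upper_box_dim d (\<Union>m\<in>{..n}. F m) \<le> (SUP m. upper_box_dim d (F m))"
proof (induction n)
  case 0
  have "upper_box_dim d (F 0) \<le> (SUP m. upper_box_dim d (F m))" by (rule SUP_upper) simp
  then show ?case by simp
next
  case (Suc n)
  have "(\<Union>m\<in>{..Suc n}. F m) = F (Suc n) \<union> (\<Union>m\<in>{..n}. F m)" by (auto simp: atMost_Suc)
  then have "upper_box_dim d (\<Union>m\<in>{..Suc n}. F m) \<le> max (upper_box_dim d (F (Suc n))) (upper_box_dim d (\<Union>m\<in>{..n}. F m))"
    using upper_union by metis
  also have "\<dots> \<le> (SUP m. upper_box_dim d (F m))"
  proof (rule max.boundedI)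
    show "upper_box_dim d (F (Suc n)) \<le> (SUP m. upper_box_dim d (F m))" by (rule SUP_upper) simp
  qed (rule Suc.IH)
  finally show ?case .
qed



lemma fiber_cond:
  assumes s: "0 \<le> s" "s = 0 \<or> ereal s < t" and t: "t \<le> (SUP n. lower_box_dim d (G n))"
    and ne: "\<exists>n. G n \<noteq> {}"
  shows "\<exists>n \<delta>0. \<delta>0 > 0 \<and> (\<forall>\<delta>. 0 < \<delta> \<longrightarrow> \<delta> < \<delta>0 \<longrightarrow> ereal (\<delta> powr (-s)) \<le> cover_num d \<delta> (G n))"
  using s(2)
proof
  assume "s = 0"
  then show ?thesis using ne nonempty_to_cover[of _ d] by (metis zero_less_one)
next
  assume "ereal s < t"
  then have "ereal s < (SUP n. lower_box_dim d (G n))" using t by (rule less_le_trans)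
  then obtain n where "ereal s < lower_box_dim d (G n)" by (auto simp: less_SUP_iff)
  from lb_to_cover[OF s(1) this] show ?thesis by blast
qed

lemma small_index: "0 < (\<delta>0::real) \<Longrightarrow> \<exists>k. \<forall>k'\<ge>k. \<forall>\<delta>. \<delta> < 1 / real (Suc k') \<longrightarrow> \<delta> < \<delta>0"
proof -
  assume "0 < \<delta>0"
  then obtain k where k: "inverse (real (Suc k)) < \<delta>0" using reals_Archimedean by blast
  show ?thesis
  proof (intro exI[of _ k] allI impI)
    fix k' \<delta> assume "k \<le> k'" "\<delta> < 1 / real (Suc k')"
    moreover have "1 / real (Suc k') \<le> 1 / real (Suc k)" using \<open>k \<le> k'\<close> by (simp add: frac_le)
    ultimately show "\<delta> < \<delta>0" using k by (simp add: inverse_eq_divide)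
  qed
qed

lemma sup_add_helper:
  fixes a :: "'i \<Rightarrow> ereal"
  assumes "\<And>k. a k + ereal s \<le> X"
  shows "(SUP k. a k) + ereal s \<le> X"
proof -
  have "(SUP k. a k) + ereal s = (SUP k. a k + ereal s)"
    by (rule SUP_ereal_add_left[symmetric]) auto
  also have "\<dots> \<le> X" by (rule SUP_least) (rule assms)
  finally show ?thesis .
qed

lemma final_step:
  fixes a t b :: ereal
  assumes a: "0 \<le> a" and t: "0 \<le> t"
    and H: "\<And>s. 0 \<le> s \<Longrightarrow> s = 0 \<or> ereal s < t \<Longrightarrow> a + ereal s \<le> b"
  shows "a + t \<le> b"
proof (rule ccontr)
  assume "\<not> a + t \<le> b"
  then have lt: "b < a + t" by simp
  have ab: "a \<le> b" using H[of 0] by (simp add: zero_ereal_def[symmetric])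
  have "a \<noteq> \<infinity>" using ab lt by auto
  then obtain a' where a': "a = ereal a'" using a by (cases a) auto
  have "b \<noteq> \<infinity>" using lt by auto
  then obtain b' where b': "b = ereal b'" "a' \<le> b'" using ab a' by (cases b) auto
  have "ereal (b' - a') < t" using lt a' b' by (cases t) auto
  then obtain s where s: "ereal (b' - a') < ereal s" "ereal s < t" using ereal_dense2 by blast
  have "a + ereal s \<le> b" using s b'(2) by (intro H) auto
  then show False using s a' b' by simp
qed



lemma part3:
  fixes E :: "('a::metric_space \<times> 'b::metric_space) set" and A :: "'a set"
  assumes A: "A \<noteq> {}" "\<And>x. x \<in> A \<Longrightarrow> fiber E x \<noteq> {}"
    and s: "0 \<le> s" "s = 0 \<or> ereal s < (INF x\<in>A. inc_packing_dim dist (fiber E x))"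
  shows "inc_packing_dim dist A + ereal s \<le> inc_packing_dim max_dist E"
  unfolding inc_packing_dim_def[of max_dist E]
proof (rule Inf_greatest, clarify)
  fix F :: "nat \<Rightarrow> ('a \<times> 'b) set" assume F: "incseq F" "E = (\<Union>n. F n)"
  define B where "B k = {x\<in>A. \<forall>\<delta>. 0 < \<delta> \<longrightarrow> \<delta> < 1 / real (Suc k) \<longrightarrow>
      ereal (\<delta> powr (-s)) \<le> cover_num dist \<delta> (fiber (F k) x)}" for k
  have Fm: "F k \<subseteq> F k'" if "k \<le> k'" for k k' using F(1) that by (simp add: incseq_def)
  have fibm: "fiber (F k) x \<subseteq> fiber (F k') x" if "k \<le> k'" for k k' x
    using Fm[OF that] by (auto simp: fiber_def)
  have incB: "incseq B"
    unfolding incseq_def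
  proof (intro allI impI subsetI)
    fix k k' x assume kk: "k \<le> k'" and x: "x \<in> B k"
    have "1 / real (Suc k') \<le> 1 / real (Suc k)" using kk by (simp add: frac_le)
    show "x \<in> B k'" unfolding B_def
    proof (intro CollectI conjI allI impI)
      show "x \<in> A" using x by (simp add: B_def)
      fix \<delta> :: real assume d: "0 < \<delta>" "\<delta> < 1 / real (Suc k')"
      then have "\<delta> < 1 / real (Suc k)" using \<open>1 / real (Suc k') \<le> _\<close> by linarith
      then have "ereal (\<delta> powr (-s)) \<le> cover_num dist \<delta> (fiber (F k) x)" using x d(1) by (simp add: B_def)
      also have "\<dots> \<le> cover_num dist \<delta> (fiber (F k') x)" by (rule cover_num_mono[OF fibm[OF kk]])
      finally show "ereal (\<delta> powr (-s)) \<le> cover_num dist \<delta> (fiber (F k') x)" .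
    qed
  qed
  have UB: "(\<Union>k. B k) = A"
  proof
    show "(\<Union>k. B k) \<subseteq> A" by (auto simp: B_def)
    show "A \<subseteq> (\<Union>k. B k)"
    proof
      fix x assume x: "x \<in> A"
      let ?G = "\<lambda>n. fiber (F n) x"
      have "incseq ?G" using fibm by (simp add: incseq_def)
      moreover have "(\<Union>n. ?G n) = fiber E x" using F(2) by (auto simp: fiber_def)
      ultimately have "inc_packing_dim dist (fiber E x) \<le> (SUP n. lower_box_dim dist (?G n))"
        unfolding inc_packing_dim_def by (intro Inf_lower CollectI exI[of _ "\<lambda>n. fiber (F n) x"]) simp
      moreover have "(INF x\<in>A. inc_packing_dim dist (fiber E x)) \<le> inc_packing_dim dist (fiber E x)"
        using x by (rule INF_lower)
      moreover have "\<exists>n. ?G n \<noteq> {}" using A(2)[OF x] F(2) by (auto simp: fiber_def)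
      ultimately obtain n \<delta>0 where n: "\<delta>0 > 0" "\<forall>\<delta>. 0 < \<delta> \<longrightarrow> \<delta> < \<delta>0 \<longrightarrow> ereal (\<delta> powr (-s)) \<le> cover_num dist \<delta> (?G n)"
        using fiber_cond[OF s, where G="\<lambda>n. fiber (F n) x" and d=dist] by (meson order_trans)
      obtain k where k: "\<forall>k'\<ge>k. \<forall>\<delta>. \<delta> < 1 / real (Suc k') \<longrightarrow> \<delta> < \<delta>0" using small_index[OF n(1)] by blast
      define m where "m = max n k"
      have "x \<in> B m" unfolding B_def
      proof (intro CollectI conjI x allI impI)
        fix \<delta> :: real assume d: "0 < \<delta>" "\<delta> < 1 / real (Suc m)"
        have "k \<le> m" by (simp add: m_def)
        then have "\<delta> < \<delta>0" using k d(2) by blast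
        then have "ereal (\<delta> powr (-s)) \<le> cover_num dist \<delta> (?G n)" using n d by blast
        also have "\<dots> \<le> cover_num dist \<delta> (fiber (F m) x)" by (intro cover_num_mono fibm) (simp add: m_def)
        finally show "ereal (\<delta> powr (-s)) \<le> cover_num dist \<delta> (fiber (F m) x)" .
      qed
      then show "x \<in> (\<Union>k. B k)" by blast
    qed
  qed
  have "inc_packing_dim dist A \<le> (SUP k. lower_box_dim dist (B k))"
    unfolding inc_packing_dim_def using incB UB by (intro Inf_lower CollectI exI[of _ B]) simp
  obtain k0 where k0: "B k0 \<noteq> {}" using UB A(1) by blast
  have Bk: "lower_box_dim dist (B k) + ereal s \<le> lower_box_dim max_dist (F k)" if "B k \<noteq> {}" for k
    by (rule asym(1)[OF that s(1), of "1 / real (Suc k)"]) (auto simp: B_def)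
  have "lower_box_dim dist (B k) + ereal s \<le> (SUP n. lower_box_dim max_dist (F n))" for k
  proof (cases "B k = {}")
    case True
    have "lower_box_dim dist (B k) + ereal s = 0 + ereal s" using True by (simp add: lower_box_dim_empty)
    also have "\<dots> \<le> lower_box_dim dist (B k0) + ereal s"
      by (intro add_right_mono lower_box_dim_nonneg)
    also have "\<dots> \<le> lower_box_dim max_dist (F k0)" by (rule Bk[OF k0])
    also have "\<dots> \<le> (SUP n. lower_box_dim max_dist (F n))" by (rule SUP_upper) simp
    finally show ?thesis .
  next
    case False
    then show ?thesis using Bk[OF False] by (meson SUP_upper UNIV_I order_trans)
  qed
  then have "(SUP k. lower_box_dim dist (B k)) + ereal s \<le> (SUP n. lower_box_dim max_dist (F n))"
    by (rule sup_add_helper)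
  then show "inc_packing_dim dist A + ereal s \<le> (SUP n. lower_box_dim max_dist (F n))"
    using \<open>inc_packing_dim dist A \<le> _\<close> by (meson add_right_mono order_trans)
qed

lemma part2:
  fixes E :: "('a::metric_space \<times> 'b::metric_space) set" and A :: "'a set"
  assumes A: "A \<noteq> {}" "\<And>x. x \<in> A \<Longrightarrow> fiber E x \<noteq> {}"
    and s: "0 \<le> s" "s = 0 \<or> ereal s < (INF x\<in>A. lower_packing_dim dist (fiber E x))"
  shows "lower_packing_dim dist A + ereal s \<le> lower_packing_dim max_dist E"
  unfolding lower_packing_dim_def[of max_dist E]
proof (rule Inf_greatest, clarify)
  fix F :: "nat \<Rightarrow> ('a \<times> 'b) set" assume F: "E \<subseteq> (\<Union>n. F n)"
  define B where "B j = {x\<in>A. \<forall>\<delta>. 0 < \<delta> \<longrightarrow> \<delta> < 1 / real (Suc (snd (prod_decode j))) \<longrightarrow>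
      ereal (\<delta> powr (-s)) \<le> cover_num dist \<delta> (fiber (F (fst (prod_decode j))) x)}" for j
  have UB: "A \<subseteq> (\<Union>j. B j)"
  proof
    fix x assume x: "x \<in> A"
    let ?G = "\<lambda>n. fiber (F n) x"
    have "fiber E x \<subseteq> (\<Union>n. ?G n)" using F by (auto simp: fiber_def)
    then have "lower_packing_dim dist (fiber E x) \<le> (SUP n. lower_box_dim dist (?G n))"
      unfolding lower_packing_dim_def by (intro Inf_lower CollectI exI[of _ "\<lambda>n. fiber (F n) x"]) simp
    moreover have "(INF x\<in>A. lower_packing_dim dist (fiber E x)) \<le> lower_packing_dim dist (fiber E x)"
      using x by (rule INF_lower)
    moreover have "\<exists>n. ?G n \<noteq> {}"
    proof -
      obtain y where "(x,y) \<in> E" using A(2)[OF x] by (auto simp: fiber_def)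
      then obtain n where "(x,y) \<in> F n" using F by blast
      then show ?thesis by (auto simp: fiber_def)
    qed
    ultimately obtain n \<delta>0 where n: "\<delta>0 > 0" "\<forall>\<delta>. 0 < \<delta> \<longrightarrow> \<delta> < \<delta>0 \<longrightarrow> ereal (\<delta> powr (-s)) \<le> cover_num dist \<delta> (?G n)"
      using fiber_cond[OF s, where G="\<lambda>n. fiber (F n) x" and d=dist] by (meson order_trans)
    obtain k where k: "\<forall>k'\<ge>k. \<forall>\<delta>. \<delta> < 1 / real (Suc k') \<longrightarrow> \<delta> < \<delta>0" using small_index[OF n(1)] by blast
    have "x \<in> B (prod_encode (n, k))" unfolding B_def
    proof (intro CollectI conjI x allI impI)
      fix \<delta> :: real assume d: "0 < \<delta>" "\<delta> < 1 / real (Suc (snd (prod_decode (prod_encode (n, k)))))"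
      then have "\<delta> < \<delta>0" using k[rule_format, of k \<delta>] by simp
      then show "ereal (\<delta> powr (-s)) \<le> cover_num dist \<delta> (fiber (F (fst (prod_decode (prod_encode (n, k))))) x)"
        using n d by simp
    qed
    then show "x \<in> (\<Union>j. B j)" by blast
  qed
  have "lower_packing_dim dist A \<le> (SUP j. lower_box_dim dist (B j))"
    unfolding lower_packing_dim_def using UB by (intro Inf_lower CollectI exI[of _ B]) simp
  obtain j0 where j0: "B j0 \<noteq> {}" using UB A(1) by blast
  have Bk: "lower_box_dim dist (B j) + ereal s \<le> (SUP n. lower_box_dim max_dist (F n))" if "B j \<noteq> {}" for j
  proof -
    have "lower_box_dim dist (B j) + ereal s \<le> lower_box_dim max_dist (F (fst (prod_decode j)))"
      by (rule asym(1)[OF that s(1), of "1 / real (Suc (snd (prod_decode j)))"]) (auto simp: B_def)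
    also have "\<dots> \<le> (SUP n. lower_box_dim max_dist (F n))" by (rule SUP_upper) simp
    finally show ?thesis .
  qed
  have "lower_box_dim dist (B j) + ereal s \<le> (SUP n. lower_box_dim max_dist (F n))" for j
  proof (cases "B j = {}")
    case True
    have "lower_box_dim dist (B j) + ereal s = 0 + ereal s" using True by (simp add: lower_box_dim_empty)
    also have "\<dots> \<le> lower_box_dim dist (B j0) + ereal s"
      by (intro add_right_mono lower_box_dim_nonneg)
    also have "\<dots> \<le> (SUP n. lower_box_dim max_dist (F n))" by (rule Bk[OF j0])
    finally show ?thesis .
  next
    case False
    then show ?thesis using Bk[OF False] by simp
  qed
  then have "(SUP j. lower_box_dim dist (B j)) + ereal s \<le> (SUP n. lower_box_dim max_dist (F n))"
    by (rule sup_add_helper)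
  then show "lower_packing_dim dist A + ereal s \<le> (SUP n. lower_box_dim max_dist (F n))"
    using \<open>lower_packing_dim dist A \<le> _\<close> by (meson add_right_mono order_trans)
qed

lemma part1:
  fixes E :: "('a::metric_space \<times> 'b::metric_space) set" and A :: "'a set"
  assumes A: "A \<noteq> {}" "\<And>x. x \<in> A \<Longrightarrow> fiber E x \<noteq> {}"
    and s: "0 \<le> s" "s = 0 \<or> ereal s < (INF x\<in>A. inc_packing_dim dist (fiber E x))"
  shows "packing_dim dist A + ereal s \<le> packing_dim max_dist E"
  unfolding packing_dim_def[of max_dist E]
proof (rule Inf_greatest, clarify)
  fix F :: "nat \<Rightarrow> ('a \<times> 'b) set" assume F: "E \<subseteq> (\<Union>n. F n)"
  define G where "G n = (\<Union>m\<in>{..n}. F m)" for n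
  have Gm: "G n \<subseteq> G n'" if "n \<le> n'" for n n' unfolding G_def using that by (intro UN_mono) auto
  define B where "B j = {x\<in>A. \<forall>\<delta>. 0 < \<delta> \<longrightarrow> \<delta> < 1 / real (Suc (snd (prod_decode j))) \<longrightarrow>
      ereal (\<delta> powr (-s)) \<le> cover_num dist \<delta> (fiber (G (fst (prod_decode j))) x)}" for j
  have UB: "A \<subseteq> (\<Union>j. B j)"
  proof
    fix x assume x: "x \<in> A"
    let ?H = "\<lambda>n. fiber (G n \<inter> E) x"
    have "incseq ?H" using Gm by (auto simp: incseq_def fiber_def)
    moreover have "(\<Union>n. ?H n) = fiber E x"
    proof
      show "(\<Union>n. ?H n) \<subseteq> fiber E x" by (auto simp: fiber_def)
      show "fiber E x \<subseteq> (\<Union>n. ?H n)"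
      proof
        fix y assume "y \<in> fiber E x"
        then have y: "(x,y) \<in> E" by (simp add: fiber_def)
        then obtain n where "(x,y) \<in> F n" using F by blast
        then have "(x,y) \<in> G n" by (auto simp: G_def)
        then show "y \<in> (\<Union>n. ?H n)" using y by (auto simp: fiber_def)
      qed
    qed
    ultimately have "inc_packing_dim dist (fiber E x) \<le> (SUP n. lower_box_dim dist (?H n))"
      unfolding inc_packing_dim_def by (intro Inf_lower CollectI exI[of _ "\<lambda>n. fiber (G n \<inter> E) x"]) simp
    moreover have "(INF x\<in>A. inc_packing_dim dist (fiber E x)) \<le> inc_packing_dim dist (fiber E x)"
      using x by (rule INF_lower)
    moreover have "\<exists>n. ?H n \<noteq> {}" using A(2)[OF x] \<open>(\<Union>n. ?H n) = fiber E x\<close> by auto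
    ultimately obtain n \<delta>0 where n: "\<delta>0 > 0" "\<forall>\<delta>. 0 < \<delta> \<longrightarrow> \<delta> < \<delta>0 \<longrightarrow> ereal (\<delta> powr (-s)) \<le> cover_num dist \<delta> (?H n)"
      using fiber_cond[OF s, where G="\<lambda>n. fiber (G n \<inter> E) x" and d=dist] by (meson order_trans)
    obtain k where k: "\<forall>k'\<ge>k. \<forall>\<delta>. \<delta> < 1 / real (Suc k') \<longrightarrow> \<delta> < \<delta>0" using small_index[OF n(1)] by blast
    have "x \<in> B (prod_encode (n, k))" unfolding B_def
    proof (intro CollectI conjI x allI impI)
      fix \<delta> :: real assume d: "0 < \<delta>" "\<delta> < 1 / real (Suc (snd (prod_decode (prod_encode (n, k)))))"
      then have "\<delta> < \<delta>0" using k[rule_format, of k \<delta>] by simp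
      then have "ereal (\<delta> powr (-s)) \<le> cover_num dist \<delta> (?H n)" using n d by simp
      also have "\<dots> \<le> cover_num dist \<delta> (fiber (G n) x)" by (rule cover_num_mono) (auto simp: fiber_def)
      finally show "ereal (\<delta> powr (-s)) \<le> cover_num dist \<delta> (fiber (G (fst (prod_decode (prod_encode (n, k))))) x)"
        by simp
    qed
    then show "x \<in> (\<Union>j. B j)" by blast
  qed
  have "packing_dim dist A \<le> (SUP j. upper_box_dim dist (B j))"
    unfolding packing_dim_def using UB by (intro Inf_lower CollectI exI[of _ B]) simp
  obtain j0 where j0: "B j0 \<noteq> {}" using UB A(1) by blast
  have Bk: "upper_box_dim dist (B j) + ereal s \<le> (SUP n. upper_box_dim max_dist (F n))" if "B j \<noteq> {}" for j
  proof -
    have "upper_box_dim dist (B j) + ereal s \<le> upper_box_dim max_dist (G (fst (prod_decode j)))"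
      by (rule asym(2)[OF that s(1), of "1 / real (Suc (snd (prod_decode j)))"]) (auto simp: B_def)
    also have "\<dots> \<le> (SUP n. upper_box_dim max_dist (F n))" unfolding G_def by (rule upper_finite_union)
    finally show ?thesis .
  qed
  have "upper_box_dim dist (B j) + ereal s \<le> (SUP n. upper_box_dim max_dist (F n))" for j
  proof (cases "B j = {}")
    case True
    have "upper_box_dim dist (B j) + ereal s = 0 + ereal s" using True by (simp add: upper_box_dim_empty)
    also have "\<dots> \<le> upper_box_dim dist (B j0) + ereal s"
      by (intro add_right_mono upper_box_dim_nonneg)
    also have "\<dots> \<le> (SUP n. upper_box_dim max_dist (F n))" by (rule Bk[OF j0])
    finally show ?thesis .
  next
    case False
    then show ?thesis using Bk[OF False] by simp
  qed
  then have "(SUP j. upper_box_dim dist (B j)) + ereal s \<le> (SUP n. upper_box_dim max_dist (F n))"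
    by (rule sup_add_helper)
  then show "packing_dim dist A + ereal s \<le> (SUP n. upper_box_dim max_dist (F n))"
    using \<open>packing_dim dist A \<le> _\<close> by (meson add_right_mono order_trans)
qed



lemma packing_dim_nonneg: "0 \<le> packing_dim d E"
  unfolding packing_dim_def
  by (rule Inf_greatest, clarify) (rule SUP_upper2[of 0], simp_all add: upper_box_dim_nonneg)

lemma lower_packing_dim_nonneg: "0 \<le> lower_packing_dim d E"
  unfolding lower_packing_dim_def
  by (rule Inf_greatest, clarify) (rule SUP_upper2[of 0], simp_all add: lower_box_dim_nonneg)

lemma inc_packing_dim_nonneg: "0 \<le> inc_packing_dim d E"
  unfolding inc_packing_dim_def
  by (rule Inf_greatest, clarify) (rule SUP_upper2[of 0], simp_all add: lower_box_dim_nonneg)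

theorem theorem4p4:
  fixes E :: "('a::metric_space \<times> 'b::metric_space) set" and A :: "'a set"
  assumes "A \<noteq> {}"
    and "\<And>x. x \<in> A \<Longrightarrow> fiber E x \<noteq> {}"
  shows "packing_dim max_dist E \<ge>
           packing_dim dist A + (INF x\<in>A. inc_packing_dim dist (fiber E x))
    \<and> lower_packing_dim max_dist E \<ge>
           lower_packing_dim dist A + (INF x\<in>A. lower_packing_dim dist (fiber E x))
    \<and> inc_packing_dim max_dist E \<ge>
           inc_packing_dim dist A + (INF x\<in>A. inc_packing_dim dist (fiber E x))"
proof (intro conjI)
  show "packing_dim dist A + (INF x\<in>A. inc_packing_dim dist (fiber E x)) \<le> packing_dim max_dist E"
    by (rule final_step[OF packing_dim_nonneg INF_greatest[OF inc_packing_dim_nonneg]])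
       (rule part1[OF assms])
  show "lower_packing_dim dist A + (INF x\<in>A. lower_packing_dim dist (fiber E x)) \<le> lower_packing_dim max_dist E"
    by (rule final_step[OF lower_packing_dim_nonneg INF_greatest[OF lower_packing_dim_nonneg]])
       (rule part2[OF assms])
  show "inc_packing_dim dist A + (INF x\<in>A. inc_packing_dim dist (fiber E x)) \<le> inc_packing_dim max_dist E"
    by (rule final_step[OF inc_packing_dim_nonneg INF_greatest[OF inc_packing_dim_nonneg]])
       (rule part3[OF assms])
qed


end
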